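(* Let $n\ge1$; for $i\in[n]$ let $d_i\ge1$, $p_{i0}<\cdots<p_{id_i}$ reals, $\mathcal{X}=\prod_i\{p_{i0},\dots,p_{id_i}\}$, $f_i:\{p_{i0},\dots,p_{id_i}\}\to[L_i,U_i]$, $g_i:\{p_{i0},\dots,p_{id_i}\}\to[L'_i,U'_i]$. Let $\phi:\prod_i[L_i,U_i]\to\mathbb{R}$ be submodular and $\varphi:\prod_i[L'_i,U'_i]\to\mathbb{R}$ supermodular, with $\phi(f_1(x_1),\dots,f_n(x_n))\ge0$ and $\varphi(g_1(x_1),\dots,g_n(x_n))>0$ for all $\boldsymbol{x}\in\mathcal{X}$. Let $\sigma=(\sigma_1,\dots,\sigma_n)$, each $\sigma_i$ a permutation of $\{0,\dots,d_i\}$, satisfy $f_i(p_{i,\sigma_i(0)})\le\cdots\le f_i(p_{i,\sigma_i(d_i)})$ and $g_i(p_{i,\sigma_i(0)})\le\cdots\le g_i(p_{i,\sigma_i(d_i)})$ for all $i$. For $\boldsymbol{j}\in\mathcal{G}=\prod_i\{0,\dots,d_i\}$ let $\psi^\sigma(\boldsymbol{j})=\phi(f_1(p_{1,\sigma_1(j_1)}),\dots,f_n(p_{n,\sigma_n(j_n)}))$ and $\theta^\sigma(\boldsymbol{j})=\varphi(g_1(p_{1,\sigma_1(j_1)}),\dots,g_n(p_{n,\sigma_n(j_n)}))$, and write $(L^{\sigma_i})^{-1}(\boldsymbol{z}_i)=A^{\sigma_i}\boldsymbol{z}_i+\boldsymbol{c}^{\sigma_i}$. Then $$\min_{\boldsymbol{x}\in\mathcal{X}}\frac{\phi(f_1(x_1),\dots,f_n(x_n))}{\varphi(g_1(x_1),\dots,g_n(x_n))}$$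 equals the optimal value of the linear program: minimize $\mu$ subject to, for every $\pi\in\Pi$ with point representation $\boldsymbol{j}^0,\dots,\boldsymbol{j}^N$, $$\mu\ge\psi^\sigma(\boldsymbol{j}^0)\rho+\sum_{t\in[N]}(\psi^\sigma(\boldsymbol{j}^t)-\psi^\sigma(\boldsymbol{j}^{t-1}))s'_{\pi_t},\qquad 1\le\theta^\sigma(\boldsymbol{j}^0)\rho+\sum_{t\in[N]}(\theta^\sigma(\boldsymbol{j}^t)-\theta^\sigma(\boldsymbol{j}^{t-1}))s'_{\pi_t},$$ and $\rho\ge s_{i1}\ge\cdots\ge s_{id_i}\ge0$, $\boldsymbol{s}'_i=A^{\sigma_i}\boldsymbol{s}_i+\boldsymbol{c}^{\sigma_i}\rho$ for all $i\in[n]$.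
   Context: $N=\sum_i d_i$. Sub/supermodularity on a box is with respect to componentwise max and min. Staircase: $\pi=(\pi_1,\dots,\pi_N)$, $\pi_t=(\pi_t(1),\pi_t(2))$, $\pi_t(1)\in[n]$ occurring exactly $d_i$ times for each $i$, $\pi_t(2)=|\{s\le t:\pi_s(1)=\pi_t(1)\}|$; $\Pi$ the set of staircases; $s'_{\pi_t}=s'_{\pi_t(1),\pi_t(2)}$; $\boldsymbol{j}^0=\boldsymbol{0}$, $\boldsymbol{j}^t=\boldsymbol{j}^{t-1}+\boldsymbol{e}_{\pi_t(1)}$. For each $i$: $T_i:\mathbb{R}^{d_i}\to\mathbb{R}^{d_i+1}$, $\lambda_{ij}=z_{ij}-z_{i,j+1}$ ($j=0,\dots,d_i$, $z_{i0}=1$, $z_{i,d_i+1}=0$), $T_i^{-1}:z_{ij}=\sum_{k=j}^{d_i}\lambda_{ik}$; $P^{\sigma_i}$ the permutation matrix with $(j,k)$ entry $1$ iff $j=\sigma_i(k)$; $L^{\sigma_i}=T_i^{-1}\circ P^{\sigma_i}\circ T_i$, an invertible affine map of $\mathbb{R}^{d_i}$. *)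

theory Defs
  imports Complex_Main "HOL-Library.FuncSet" "HOL-Combinatorics.Permutations"
begin

text \<open>Indices: coordinates i range over {..<n} (i.e. [n] shifted to 0-based);
  vectors in R^{d} are functions nat => real using entries 1..d, zero elsewhere;
  vectors in R^{d+1} use entries 0..d, zero elsewhere.\<close>

definition submodular_on :: "nat \<Rightarrow> (nat \<Rightarrow> real set) \<Rightarrow> ((nat \<Rightarrow> real) \<Rightarrow> real) \<Rightarrow> bool" where
  "submodular_on n B F \<longleftrightarrow>
     (\<forall>x\<in>Pi\<^sub>E {..<n} B. \<forall>y\<in>Pi\<^sub>E {..<n} B. F (sup x y) + F (inf x y) \<le> F x + F y)"

definition supermodular_on :: "nat \<Rightarrow> (nat \<Rightarrow> real set) \<Rightarrow> ((nat \<Rightarrow> real) \<Rightarrow> real) \<Rightarrow> bool" where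
  "supermodular_on n B F \<longleftrightarrow>
     (\<forall>x\<in>Pi\<^sub>E {..<n} B. \<forall>y\<in>Pi\<^sub>E {..<n} B. F (sup x y) + F (inf x y) \<ge> F x + F y)"

text \<open>Staircase, given by its first components pi_t(1) = stc ! (t-1), t = 1..N.\<close>
definition staircase :: "nat \<Rightarrow> (nat \<Rightarrow> nat) \<Rightarrow> nat list \<Rightarrow> bool" where
  "staircase n d stc \<longleftrightarrow> length stc = (\<Sum>i<n. d i) \<and> set stc \<subseteq> {..<n} \<and>
     (\<forall>i<n. count_list stc i = d i)"

definition stair2 :: "nat list \<Rightarrow> nat \<Rightarrow> nat" where
  "stair2 stc t = count_list (take t stc) (stc ! (t - 1))"

definition stair_pt :: "nat list \<Rightarrow> nat \<Rightarrow> nat \<Rightarrow> nat" where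
  "stair_pt stc t = (\<lambda>i. count_list (take t stc) i)"

definition zext :: "nat \<Rightarrow> (nat \<Rightarrow> real) \<Rightarrow> nat \<Rightarrow> real" where
  "zext d z j = (if j = 0 then 1 else if j \<le> d then z j else 0)"

definition Tmap :: "nat \<Rightarrow> (nat \<Rightarrow> real) \<Rightarrow> nat \<Rightarrow> real" where
  "Tmap d z = (\<lambda>j. if j \<le> d then zext d z j - zext d z (Suc j) else 0)"

definition Tinv :: "nat \<Rightarrow> (nat \<Rightarrow> real) \<Rightarrow> nat \<Rightarrow> real" where
  "Tinv d lam = (\<lambda>j. if 1 \<le> j \<and> j \<le> d then (\<Sum>k=j..d. lam k) else 0)"

definition Pmat :: "nat \<Rightarrow> (nat \<Rightarrow> nat) \<Rightarrow> (nat \<Rightarrow> real) \<Rightarrow> nat \<Rightarrow> real" where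
  "Pmat d \<sigma> lam = (\<lambda>j. if j \<le> d then (\<Sum>k=0..d. (if j = \<sigma> k then 1 else 0) * lam k) else 0)"

definition Lmap :: "nat \<Rightarrow> (nat \<Rightarrow> nat) \<Rightarrow> (nat \<Rightarrow> real) \<Rightarrow> nat \<Rightarrow> real" where
  "Lmap d \<sigma> = Tinv d \<circ> Pmat d \<sigma> \<circ> Tmap d"

definition Rvec :: "nat \<Rightarrow> (nat \<Rightarrow> real) set" where
  "Rvec d = {z. \<forall>j. (j = 0 \<or> d < j) \<longrightarrow> z j = 0}"

definition Linv :: "nat \<Rightarrow> (nat \<Rightarrow> nat) \<Rightarrow> (nat \<Rightarrow> real) \<Rightarrow> nat \<Rightarrow> real" where
  "Linv d \<sigma> = the_inv_into (Rvec d) (Lmap d \<sigma>)"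

text \<open>(L^sigma)^{-1}(z) = A^sigma z + c^sigma: c = (L^sigma)^{-1}(0), A z = (L^sigma)^{-1}(z) - c.\<close>
definition cvec :: "nat \<Rightarrow> (nat \<Rightarrow> nat) \<Rightarrow> nat \<Rightarrow> real" where
  "cvec d \<sigma> = Linv d \<sigma> (\<lambda>_. 0)"

definition Amul :: "nat \<Rightarrow> (nat \<Rightarrow> nat) \<Rightarrow> (nat \<Rightarrow> real) \<Rightarrow> nat \<Rightarrow> real" where
  "Amul d \<sigma> z = (\<lambda>j. Linv d \<sigma> z j - cvec d \<sigma> j)"

definition vrestr :: "nat \<Rightarrow> (nat \<Rightarrow> real) \<Rightarrow> nat \<Rightarrow> real" where
  "vrestr d z = (\<lambda>j. if 1 \<le> j \<and> j \<le> d then z j else 0)"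

definition LP_feasible_mu ::
  "nat \<Rightarrow> (nat \<Rightarrow> nat) \<Rightarrow> (nat \<Rightarrow> nat \<Rightarrow> nat) \<Rightarrow> ((nat \<Rightarrow> nat) \<Rightarrow> real) \<Rightarrow> ((nat \<Rightarrow> nat) \<Rightarrow> real) \<Rightarrow> real set" where
  "LP_feasible_mu n d \<sigma> \<psi> \<theta> = {\<mu>. \<exists>(\<rho>::real) (s::nat \<Rightarrow> nat \<Rightarrow> real) (s'::nat \<Rightarrow> nat \<Rightarrow> real).
     (\<forall>stc. staircase n d stc \<longrightarrow>
        \<mu> \<ge> \<psi> (stair_pt stc 0) * \<rho> +
            (\<Sum>t\<in>{1..(\<Sum>i<n. d i)}. (\<psi> (stair_pt stc t) - \<psi> (stair_pt stc (t - 1))) * s' (stc ! (t - 1)) (stair2 stc t)) \<and>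
        1 \<le> \<theta> (stair_pt stc 0) * \<rho> +
            (\<Sum>t\<in>{1..(\<Sum>i<n. d i)}. (\<theta> (stair_pt stc t) - \<theta> (stair_pt stc (t - 1))) * s' (stc ! (t - 1)) (stair2 stc t))) \<and>
     (\<forall>i<n. \<rho> \<ge> s i 1 \<and> (\<forall>j. 1 \<le> j \<and> j < d i \<longrightarrow> s i j \<ge> s i (Suc j)) \<and> s i (d i) \<ge> 0) \<and>
     (\<forall>i<n. \<forall>j. 1 \<le> j \<and> j \<le> d i \<longrightarrow>
        s' i j = Amul (d i) (\<sigma> i) (vrestr (d i) (s i)) j + cvec (d i) (\<sigma> i) j * \<rho>)}"

end

theory Submission
  imports Defs
begin

lemma Pmat_sigma:
  assumes "\<sigma> permutes {0..d}" "k \<le> d"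
  shows "Pmat d \<sigma> lam (\<sigma> k) = lam k"
proof -
  have sk: "\<sigma> k \<le> d" using assms permutes_in_image[OF assms(1), of k] by auto
  have inj: "inj \<sigma>" using permutes_inj[OF assms(1)] .
  have "(\<Sum>k'=0..d. (if \<sigma> k = \<sigma> k' then 1 else 0) * lam k') = (\<Sum>k'=0..d. (if k' = k then lam k' else 0))"
    by (rule sum.cong) (auto simp: inj_eq[OF inj])
  also have "\<dots> = lam k" using assms(2) by simp
  finally show ?thesis using sk by (simp add: Pmat_def)
qed

lemma Pmat_sum:
  assumes "\<sigma> permutes {0..d}"
  shows "(\<Sum>j=0..d. Pmat d \<sigma> lam j) = (\<Sum>k=0..d. lam k)"
proof -
  have "(\<Sum>j=0..d. Pmat d \<sigma> lam j) = (\<Sum>k=0..d. Pmat d \<sigma> lam (\<sigma> k))"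
    using sum.permute[OF assms] by simp
  also have "\<dots> = (\<Sum>k=0..d. lam k)"
    by (rule sum.cong) (auto simp: Pmat_sigma[OF assms])
  finally show ?thesis .
qed

lemma Tmap_sum: "(\<Sum>j=0..d. Tmap d z j) = 1"
proof -
  have "(\<Sum>j=0..d. Tmap d z j) = (\<Sum>j=0..d. zext d z j - zext d z (Suc j))"
    by (rule sum.cong) (auto simp: Tmap_def)
  also have "\<dots> = - (\<Sum>j=0..d. zext d z (Suc j) - zext d z j)"
    by (simp add: sum_negf[symmetric])
  also have "\<dots> = 1" by (subst sum_Suc_diff) (auto simp: zext_def)
  finally show ?thesis .
qed

lemma Tinv_Tmap:
  assumes "z \<in> Rvec d"
  shows "Tinv d (Tmap d z) = z"
proof
  fix j
  show "Tinv d (Tmap d z) j = z j"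
  proof (cases "1 \<le> j \<and> j \<le> d")
    case True
    have "(\<Sum>k=j..d. Tmap d z k) = (\<Sum>k=j..d. zext d z k - zext d z (Suc k))"
      by (rule sum.cong) (auto simp: Tmap_def)
    also have "\<dots> = - (\<Sum>k=j..d. zext d z (Suc k) - zext d z k)"
      by (simp add: sum_negf[symmetric])
    also have "\<dots> = z j" using True by (subst sum_Suc_diff) (auto simp: zext_def)
    finally show ?thesis using True by (simp add: Tinv_def)
  next
    case False
    then have "j = 0 \<or> d < j" by auto
    then show ?thesis using assms False unfolding Rvec_def Tinv_def by auto
  qed
qed

lemma Tmap_Tinv:
  assumes "\<forall>k>d. lam k = 0" "(\<Sum>k=0..d. lam k) = 1"
  shows "Tmap d (Tinv d lam) = lam"
proof
  fix j
  show "Tmap d (Tinv d lam) j = lam j"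
  proof (cases "j = 0")
    case True
    show ?thesis
    proof (cases "d = 0")
      case True
      then show ?thesis using assms \<open>j = 0\<close> by (simp add: Tmap_def zext_def Tinv_def)
    next
      case False
      have "(\<Sum>k=0..d. lam k) = lam 0 + (\<Sum>k=Suc 0..d. lam k)"
        by (simp add: sum.atLeast_Suc_atMost)
      then show ?thesis using assms False \<open>j = 0\<close> by (simp add: Tmap_def zext_def Tinv_def)
    qed
  next
    case False
    show ?thesis
    proof (cases "j \<le> d")
      case True
      show ?thesis
      proof (cases "Suc j \<le> d")
        case True
        have "(\<Sum>k=j..d. lam k) = lam j + (\<Sum>k=Suc j..d. lam k)"
          using True by (simp add: sum.atLeast_Suc_atMost)
        then show ?thesis using True \<open>j \<noteq> 0\<close> by (simp add: Tmap_def zext_def Tinv_def)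
      next
        case F2: False
        then have "j = d" using True by simp
        then show ?thesis using \<open>j \<noteq> 0\<close> by (simp add: Tmap_def zext_def Tinv_def)
      qed
    next
      case False
      then show ?thesis using assms by (simp add: Tmap_def)
    qed
  qed
qed

lemma Tmap_Lmap:
  assumes "\<sigma> permutes {0..d}"
  shows "Tmap d (Lmap d \<sigma> x) = Pmat d \<sigma> (Tmap d x)"
  unfolding Lmap_def comp_def
  by (rule Tmap_Tinv) (simp add: Pmat_def, simp add: Pmat_sum[OF assms] Tmap_sum)

lemma Tinv_Rvec: "Tinv d lam \<in> Rvec d"
  by (auto simp: Tinv_def Rvec_def)

lemma Lmap_Rvec: "Lmap d \<sigma> x \<in> Rvec d"
  by (simp add: Lmap_def Tinv_Rvec)

lemma Lmap_inj:
  assumes "\<sigma> permutes {0..d}"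
  shows "inj_on (Lmap d \<sigma>) (Rvec d)"
proof
  fix x y assume x: "x \<in> Rvec d" and y: "y \<in> Rvec d" and e: "Lmap d \<sigma> x = Lmap d \<sigma> y"
  have P: "Pmat d \<sigma> (Tmap d x) = Pmat d \<sigma> (Tmap d y)"
    using Tmap_Lmap[OF assms, of x] Tmap_Lmap[OF assms, of y] e by simp
  have "Tmap d x = Tmap d y"
  proof
    fix k show "Tmap d x k = Tmap d y k"
    proof (cases "k \<le> d")
      case True
      then show ?thesis using Pmat_sigma[OF assms True, of "Tmap d x"] Pmat_sigma[OF assms True, of "Tmap d y"] P
        by simp
    qed (simp add: Tmap_def)
  qed
  then show "x = y" using Tinv_Tmap[OF x] Tinv_Tmap[OF y] by metis
qed

lemma Lmap_surj:
  assumes "\<sigma> permutes {0..d}" "z \<in> Rvec d"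
  shows "z \<in> Lmap d \<sigma> ` Rvec d"
proof -
  define lam where "lam = (\<lambda>k. if k \<le> d then Tmap d z (\<sigma> k) else 0)"
  have lsum: "(\<Sum>k=0..d. lam k) = 1"
  proof -
    have A: "(\<Sum>k=0..d. Tmap d z (\<sigma> k)) = (\<Sum>k=0..d. Tmap d z k)"
      using sum.permute[OF assms(1), of "Tmap d z"] by (simp add: comp_def)
    show ?thesis using A Tmap_sum[of d z] by (simp add: lam_def)
  qed
  define w where "w = Tinv d lam"
  have Tw: "Tmap d w = lam" unfolding w_def by (rule Tmap_Tinv) (simp add: lam_def, fact lsum)
  have "Pmat d \<sigma> lam = Tmap d z"
  proof
    fix j show "Pmat d \<sigma> lam j = Tmap d z j"
    proof (cases "j \<le> d")
      case True
      then have "j \<in> \<sigma> ` {0..d}" using permutes_image[OF assms(1)] by auto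
      then obtain k where k: "k \<le> d" "j = \<sigma> k" by auto
      then show ?thesis using Pmat_sigma[OF assms(1) k(1)] by (simp add: lam_def)
    qed (simp add: Tmap_def Pmat_def)
  qed
  then have "Lmap d \<sigma> w = z" using Tw Tinv_Tmap[OF assms(2)] by (simp add: Lmap_def)
  moreover have "w \<in> Rvec d" by (simp add: w_def Tinv_Rvec)
  ultimately show ?thesis by blast
qed

lemma Linv_props:
  assumes "\<sigma> permutes {0..d}" "z \<in> Rvec d"
  shows "Linv d \<sigma> z \<in> Rvec d" "Lmap d \<sigma> (Linv d \<sigma> z) = z"
  unfolding Linv_def
  by (rule the_inv_into_into[OF Lmap_inj[OF assms(1)] Lmap_surj[OF assms]], simp)
     (rule f_the_inv_into_f[OF Lmap_inj[OF assms(1)] Lmap_surj[OF assms]])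

lemma Linv_Lmap:
  assumes "\<sigma> permutes {0..d}" "w \<in> Rvec d"
  shows "Linv d \<sigma> (Lmap d \<sigma> w) = w"
  unfolding Linv_def by (rule the_inv_into_f_f[OF Lmap_inj[OF assms(1)] assms(2)])

lemma Lmap_affine:
  "Lmap d \<sigma> (\<lambda>j. a * x j + (1 - a) * y j) = (\<lambda>j. a * Lmap d \<sigma> x j + (1 - a) * Lmap d \<sigma> y j)"
proof -
  have Z: "zext d (\<lambda>j. a * x j + (1 - a) * y j) = (\<lambda>j. a * zext d x j + (1 - a) * zext d y j)"
    by (auto simp: zext_def algebra_simps)
  have T: "Tmap d (\<lambda>j. a * x j + (1 - a) * y j) = (\<lambda>j. a * Tmap d x j + (1 - a) * Tmap d y j)"
    unfolding Tmap_def Z by (auto simp: algebra_simps fun_eq_iff)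
  have P: "Pmat d \<sigma> (\<lambda>j. a * u j + (1 - a) * v j) = (\<lambda>j. a * Pmat d \<sigma> u j + (1 - a) * Pmat d \<sigma> v j)" for u v
    unfolding Pmat_def fun_eq_iff
    by (auto simp: sum_distrib_left sum.distrib[symmetric] intro!: sum.cong simp: algebra_simps)
  have I: "Tinv d (\<lambda>j. a * u j + (1 - a) * v j) = (\<lambda>j. a * Tinv d u j + (1 - a) * Tinv d v j)" for u v
    unfolding Tinv_def fun_eq_iff
    by (auto simp: sum_distrib_left sum.distrib[symmetric] intro!: sum.cong simp: algebra_simps)
  show ?thesis by (simp add: Lmap_def T P I)
qed

lemma Rvec_comb: "x \<in> Rvec d \<Longrightarrow> y \<in> Rvec d \<Longrightarrow> (\<lambda>j. a * x j + b * y j) \<in> Rvec d"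
  by (auto simp: Rvec_def)

lemma Linv_scale:
  assumes "\<sigma> permutes {0..d}" "z \<in> Rvec d"
  shows "Linv d \<sigma> (\<lambda>j. r * z j) = (\<lambda>j. r * Linv d \<sigma> z j + (1 - r) * Linv d \<sigma> (\<lambda>_. 0) j)"
proof -
  have z0: "(\<lambda>_. 0) \<in> Rvec d" by (simp add: Rvec_def)
  define u where "u = (\<lambda>j. r * Linv d \<sigma> z j + (1 - r) * Linv d \<sigma> (\<lambda>_. 0) j)"
  have uR: "u \<in> Rvec d" unfolding u_def
    by (rule Rvec_comb; rule Linv_props[OF assms(1)]) (fact assms(2) z0)+
  have "Lmap d \<sigma> u = (\<lambda>j. r * z j)"
    unfolding u_def Lmap_affine Linv_props(2)[OF assms] Linv_props(2)[OF assms(1) z0] by simp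
  then show ?thesis using Linv_Lmap[OF assms(1) uR] u_def by simp
qed

lemma Amul_scale:
  assumes "\<sigma> permutes {0..d}" "z \<in> Rvec d"
  shows "Amul d \<sigma> (\<lambda>j. r * z j) k + cvec d \<sigma> k * r = r * Linv d \<sigma> z k"
  unfolding Amul_def cvec_def Linv_scale[OF assms] by (simp add: algebra_simps)

lemma count_take_le: "count_list (take T xs) x \<le> count_list xs x"
proof -
  have "count_list xs x = count_list (take T xs) x + count_list (drop T xs) x"
    by (metis append_take_drop_id count_list_append)
  then show ?thesis by simp
qed

lemma stair_pt_0: "stair_pt stc 0 = (\<lambda>i. 0)"
  by (simp add: stair_pt_def)

lemma stair_pt_Suc:
  assumes "T < length stc"
  shows "stair_pt stc (Suc T) = (\<lambda>i. stair_pt stc T i + (if i = stc ! T then 1 else 0))"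
  using assms by (auto simp: stair_pt_def take_Suc_conv_app_nth fun_eq_iff)

lemma stair2_Suc:
  assumes "T < length stc"
  shows "stair2 stc (Suc T) = stair_pt stc T (stc ! T) + 1"
  using assms by (simp add: stair2_def stair_pt_def take_Suc_conv_app_nth)

lemma stair_props:
  assumes st: "staircase n d stc" and t: "1 \<le> t" "t \<le> (\<Sum>i<n. d i)"
  shows "stc ! (t - 1) < n" "1 \<le> stair2 stc t" "stair2 stc t \<le> d (stc ! (t - 1))"
proof -
  have len: "length stc = (\<Sum>i<n. d i)" and set: "set stc \<subseteq> {..<n}" and cnt: "\<forall>i<n. count_list stc i = d i"
    using st by (auto simp: staircase_def)
  have tl: "t - 1 < length stc" using t len by simp
  then have "stc ! (t - 1) \<in> set stc" by simp
  then show i: "stc ! (t - 1) < n" using set by auto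
  have "stair2 stc t = stair2 stc (Suc (t - 1))" using t by simp
  also have "\<dots> = stair_pt stc (t - 1) (stc ! (t - 1)) + 1" by (rule stair2_Suc[OF tl])
  finally have e: "stair2 stc t = stair_pt stc (t - 1) (stc ! (t - 1)) + 1" .
  then show "1 \<le> stair2 stc t" by simp
  show "stair2 stc t \<le> d (stc ! (t - 1))"
    unfolding stair2_def using count_take_le[of t stc "stc ! (t - 1)"] cnt i by simp
qed

lemma stair_pt_le:
  assumes st: "staircase n d stc" "i < n"
  shows "stair_pt stc T i \<le> d i"
  using assms count_take_le[of T stc i] by (simp add: staircase_def stair_pt_def)

lemma stair_pt_end:
  assumes st: "staircase n d stc" "i < n"
  shows "stair_pt stc (\<Sum>i<n. d i) i = d i"
  using assms by (simp add: staircase_def stair_pt_def)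

lemma achieve:
  fixes G :: "(nat \<Rightarrow> nat) \<Rightarrow> real"
  assumes st: "staircase n d stc"
    and J: "\<forall>i<n. J i \<le> d i"
    and loc: "\<And>a b. (\<forall>i<n. a i = b i) \<Longrightarrow> G a = G b"
    and sub: "\<And>a b. (\<forall>i<n. a i \<le> d i) \<Longrightarrow> (\<forall>i<n. b i \<le> d i) \<Longrightarrow>
               G (\<lambda>i. max (a i) (b i)) + G (\<lambda>i. min (a i) (b i)) \<le> G a + G b"
  shows "G (stair_pt stc 0) + (\<Sum>t\<in>{1..(\<Sum>i<n. d i)}. (G (stair_pt stc t) - G (stair_pt stc (t - 1))) *
            (if 1 \<le> stair2 stc t \<and> stair2 stc t \<le> J (stc ! (t - 1)) then 1 else 0)) \<le> G J"
proof -
  define N where "N = (\<Sum>i<n. d i)"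
  have len: "length stc = N" using st by (simp add: staircase_def N_def)
  define ind where "ind t = (if 1 \<le> stair2 stc t \<and> stair2 stc t \<le> J (stc ! (t - 1)) then 1 else (0::real))" for t
  have claim: "T \<le> N \<Longrightarrow> G (stair_pt stc 0) + (\<Sum>t\<in>{1..T}. (G (stair_pt stc t) - G (stair_pt stc (t - 1))) * ind t)
      \<le> G (\<lambda>i. min (stair_pt stc T i) (J i))" for T
  proof (induction T)
    case 0
    then show ?case by (simp add: stair_pt_0)
  next
    case (Suc T)
    have TL: "T < length stc" using Suc.prems len by simp
    define i where "i = stc ! T"
    define a where "a = stair_pt stc T"
    have a1: "stair_pt stc (Suc T) = (\<lambda>i'. a i' + (if i' = i then 1 else 0))"
      using stair_pt_Suc[OF TL] by (simp add: a_def i_def)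
    have k: "stair2 stc (Suc T) = a i + 1" using stair2_Suc[OF TL] by (simp add: a_def i_def)
    have IH: "G (stair_pt stc 0) + (\<Sum>t\<in>{1..T}. (G (stair_pt stc t) - G (stair_pt stc (t - 1))) * ind t)
      \<le> G (\<lambda>i. min (a i) (J i))" using Suc by (simp add: a_def)
    have step: "(G (stair_pt stc (Suc T)) - G a) * ind (Suc T) \<le>
        G (\<lambda>i'. min (stair_pt stc (Suc T) i') (J i')) - G (\<lambda>i. min (a i) (J i))"
    proof (cases "a i + 1 \<le> J i")
      case True
      then have ind1: "ind (Suc T) = 1" by (simp add: ind_def k i_def)
      define x where "x = (\<lambda>i'. min (stair_pt stc (Suc T) i') (J i'))"
      have gx: "\<forall>i<n. x i \<le> d i" using stair_pt_le[OF st] by (auto simp: x_def min.coboundedI1)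
      have ga: "\<forall>i<n. a i \<le> d i" using stair_pt_le[OF st] by (simp add: a_def)
      have mx: "(\<lambda>i'. max (x i') (a i')) = stair_pt stc (Suc T)"
        using True by (auto simp: x_def a1 fun_eq_iff)
      have mn: "(\<lambda>i'. min (x i') (a i')) = (\<lambda>i. min (a i) (J i))"
        using True by (auto simp: x_def a1 fun_eq_iff)
      have "G (stair_pt stc (Suc T)) + G (\<lambda>i. min (a i) (J i)) \<le> G x + G a"
        using sub[OF gx ga] by (simp add: mx mn)
      then show ?thesis by (simp add: ind1 x_def)
    next
      case False
      then have ind0: "ind (Suc T) = 0" by (simp add: ind_def k i_def)
      have "(\<lambda>i'. min (stair_pt stc (Suc T) i') (J i')) = (\<lambda>i. min (a i) (J i))"
        using False by (auto simp: a1 fun_eq_iff)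
      then show ?thesis by (simp add: ind0)
    qed
    show ?case using IH step by (simp add: a_def)
  qed
  have "G (\<lambda>i. min (stair_pt stc N i) (J i)) = G J"
    by (rule loc) (use J stair_pt_end[OF st] in \<open>auto simp: N_def\<close>)
  then show ?thesis using claim[of N] by (simp add: N_def ind_def)
qed

lemma abel:
  fixes h a :: "nat \<Rightarrow> real"
  assumes a0: "a 0 = 1" and mono: "\<forall>t<M. a (Suc t) \<le> a t" and aM: "a M \<ge> 0" and h: "\<forall>t\<le>M. h t \<ge> 0"
  shows "h 0 + (\<Sum>t\<in>{1..M}. (h t - h (t - 1)) * a t) \<ge> 0"
proof -
  have claim: "T \<le> M \<Longrightarrow> h 0 + (\<Sum>t\<in>{1..T}. (h t - h (t - 1)) * a t) \<ge> h T * a T" for T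
  proof (induction T)
    case 0 then show ?case by (simp add: a0)
  next
    case (Suc T)
    have "h T * (a T - a (Suc T)) \<ge> 0" using Suc.prems mono h by (intro mult_nonneg_nonneg) auto
    then show ?case using Suc by (simp add: algebra_simps)
  qed
  have "h M * a M \<ge> 0" using h aM by simp
  then show ?thesis using claim[of M] by simp
qed

lemma stair_exists:
  fixes z :: "nat \<Rightarrow> nat \<Rightarrow> real"
  shows "\<forall>d. (\<Sum>i<n. d i) = N \<longrightarrow> (\<forall>i<n. \<forall>k. 1 \<le> k \<longrightarrow> k < d i \<longrightarrow> z i (Suc k) \<le> z i k) \<longrightarrow>
    (\<exists>stc. staircase n d stc \<and>
       (\<forall>t. 1 \<le> t \<longrightarrow> t < N \<longrightarrow> z (stc ! t) (stair2 stc (Suc t)) \<le> z (stc ! (t - 1)) (stair2 stc t)))"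
proof (induction N)
  case 0
  show ?case
  proof (intro allI impI)
    fix d :: "nat \<Rightarrow> nat" assume "(\<Sum>i<n. d i) = 0"
    then have "\<forall>i<n. d i = 0" by simp
    then have "staircase n d []" by (simp add: staircase_def)
    then show "\<exists>stc. staircase n d stc \<and> (\<forall>t. 1 \<le> t \<longrightarrow> t < 0 \<longrightarrow> z (stc ! t) (stair2 stc (Suc t)) \<le> z (stc ! (t - 1)) (stair2 stc t))"
      by blast
  qed
next
  case (Suc N)
  show ?case
  proof (intro allI impI)
    fix d :: "nat \<Rightarrow> nat"
    assume sd: "(\<Sum>i<n. d i) = Suc N" and zm: "\<forall>i<n. \<forall>k. 1 \<le> k \<longrightarrow> k < d i \<longrightarrow> z i (Suc k) \<le> z i k"
    define I where "I = {i. i < n \<and> 1 \<le> d i}"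
    have finI: "finite I" by (simp add: I_def)
    have neI: "I \<noteq> {}"
    proof
      assume "I = {}"
      then have "\<forall>i<n. d i = 0" by (auto simp: I_def)
      then show False using sd by simp
    qed
    define f where "f i = z i (d i)" for i
    have "Min (f ` I) \<in> f ` I" using finI neI by (intro Min_in) auto
    then obtain i0 where i0I: "i0 \<in> I" and i0e: "f i0 = Min (f ` I)" by auto
    have i0min: "\<forall>i\<in>I. f i0 \<le> f i" using finI i0e by auto
    have i0n: "i0 < n" and di0: "1 \<le> d i0" using i0I by (auto simp: I_def)
    define d' where "d' = d(i0 := d i0 - 1)"
    have "(\<Sum>i<n. d i) = d i0 + (\<Sum>i\<in>{..<n} - {i0}. d i)"
      using i0n by (simp add: sum.remove)
    moreover have "(\<Sum>i<n. d' i) = d' i0 + (\<Sum>i\<in>{..<n} - {i0}. d' i)"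
      using i0n by (simp add: sum.remove)
    moreover have "(\<Sum>i\<in>{..<n} - {i0}. d' i) = (\<Sum>i\<in>{..<n} - {i0}. d i)"
      by (rule sum.cong) (auto simp: d'_def)
    ultimately have sd': "(\<Sum>i<n. d' i) = N" using sd di0 by (simp add: d'_def)
    have zm': "\<forall>i<n. \<forall>k. 1 \<le> k \<longrightarrow> k < d' i \<longrightarrow> z i (Suc k) \<le> z i k"
      using zm by (auto simp: d'_def split: if_splits)
    obtain stc' where st': "staircase n d' stc'" and
      mono': "\<forall>t. 1 \<le> t \<longrightarrow> t < N \<longrightarrow> z (stc' ! t) (stair2 stc' (Suc t)) \<le> z (stc' ! (t - 1)) (stair2 stc' t)"
      using Suc.IH sd' zm' by blast
    have len': "length stc' = N" using st' sd' by (simp add: staircase_def)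
    define stc where "stc = stc' @ [i0]"
    have cnt': "\<forall>i<n. count_list stc' i = d' i" using st' by (simp add: staircase_def)
    have cntall: "\<forall>i<n. count_list stc i = d i"
    proof (intro allI impI)
      fix i assume "i < n"
      then show "count_list stc i = d i" using cnt' di0 by (auto simp: stc_def d'_def)
    qed
    moreover have "set stc \<subseteq> {..<n}" using st' i0n by (auto simp: stc_def staircase_def)
    moreover have "length stc = (\<Sum>i<n. d i)" using len' sd by (simp add: stc_def)
    ultimately have st: "staircase n d stc" using cntall by (simp add: staircase_def)
    have lenN: "length stc = Suc N" using len' by (simp add: stc_def)
    have s2: "stair2 stc t = stair2 stc' t" if "t \<le> N" "1 \<le> t" for t
      using that len' by (simp add: stair2_def stc_def nth_append)
    have nth: "stc ! t = stc' ! t" if "t < N" for t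
      using that len' by (simp add: stc_def nth_append)
    show "\<exists>stc. staircase n d stc \<and>
       (\<forall>t. 1 \<le> t \<longrightarrow> t < Suc N \<longrightarrow> z (stc ! t) (stair2 stc (Suc t)) \<le> z (stc ! (t - 1)) (stair2 stc t))"
    proof (intro exI[of _ stc] conjI st allI impI)
      fix t assume t1: "1 \<le> t" and tN: "t < Suc N"
      show "z (stc ! t) (stair2 stc (Suc t)) \<le> z (stc ! (t - 1)) (stair2 stc t)"
      proof (cases "t < N")
        case True
        then show ?thesis using mono' t1 s2[of t] s2[of "Suc t"] nth[of t] nth[of "t - 1"] by simp
      next
        case False
        then have tN': "t = N" using tN by simp
        have A: "stc ! t = i0" using tN' len' by (simp add: stc_def nth_append)
        have B: "stair2 stc (Suc t) = d i0"
          using A tN' lenN cntall i0n by (simp add: stair2_def)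
        define i1 where "i1 = stc' ! (N - 1)"
        have i1set: "i1 \<in> set stc'" using t1 tN' len' by (simp add: i1_def)
        then have i1n: "i1 < n" using st' by (auto simp: staircase_def)
        have cnt1: "count_list stc' i1 = d' i1" using st' i1n by (simp add: staircase_def)
        have pos1: "1 \<le> d' i1" using i1set cnt1 count_list_0_iff[of stc' i1] by simp
        have C: "stc ! (t - 1) = i1" using tN' t1 len' by (simp add: stc_def nth_append i1_def)
        have D: "stair2 stc t = d' i1" using s2[of t] tN' t1 C nth[of "t - 1"] cnt1 len'
          by (simp add: stair2_def)
        show ?thesis
        proof (cases "i1 = i0")
          case True
          then have "z i0 (Suc (d i0 - 1)) \<le> z i0 (d i0 - 1)"
            using zm[rule_format, OF i0n, of "d i0 - 1"] pos1 True by (simp add: d'_def)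
          then show ?thesis using A B C D True di0 by (simp add: d'_def)
        next
          case False
          then have "i1 \<in> I" using pos1 i1n by (simp add: I_def d'_def)
          then show ?thesis using i0min A B C D False by (simp add: f_def d'_def)
        qed
      qed
    qed
  qed
qed

lemma reg_dir:
  assumes T: "\<forall>j\<le>D. Tmap D z j \<ge> 0" and D: "1 \<le> D"
  shows "z 1 \<le> 1" "\<forall>k. 1 \<le> k \<longrightarrow> k < D \<longrightarrow> z (Suc k) \<le> z k" "z D \<ge> 0"
proof -
  show "z 1 \<le> 1" using T[rule_format, of 0] D by (simp add: Tmap_def zext_def)
  show "\<forall>k. 1 \<le> k \<longrightarrow> k < D \<longrightarrow> z (Suc k) \<le> z k"
  proof (intro allI impI)
    fix k assume "1 \<le> k" "k < D"
    then show "z (Suc k) \<le> z k" using T[rule_format, of k] by (simp add: Tmap_def zext_def)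
  qed
  show "z D \<ge> 0" using T[rule_format, of D] D by (simp add: Tmap_def zext_def)
qed

lemma reg_conv:
  assumes "z 1 \<le> 1" "\<forall>k. 1 \<le> k \<longrightarrow> k < D \<longrightarrow> z (Suc k) \<le> z k" "z D \<ge> 0" "1 \<le> D"
  shows "\<forall>j\<le>D. Tmap D z j \<ge> 0"
proof (intro allI impI)
  fix j assume j: "j \<le> D"
  consider "j = 0" | "1 \<le> j \<and> j < D" | "j = D \<and> j \<noteq> 0" using j by linarith
  then show "Tmap D z j \<ge> 0"
  proof cases
    case 1 then show ?thesis using assms by (simp add: Tmap_def zext_def)
  next
    case 2 then show ?thesis using assms(2) by (simp add: Tmap_def zext_def)
  next
    case 3 then show ?thesis using assms by (simp add: Tmap_def zext_def)
  qed
qed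

lemma chain_le:
  fixes s :: "nat \<Rightarrow> real"
  assumes "\<forall>k. 1 \<le> k \<longrightarrow> k < D \<longrightarrow> s (Suc k) \<le> s k" "1 \<le> a" "a \<le> b" "b \<le> D"
  shows "s b \<le> s a"
  using assms(3,4)
proof (induction b)
  case 0 then show ?case by simp
next
  case (Suc b)
  show ?case
  proof (cases "a = Suc b")
    case False
    then have "a \<le> b" using Suc.prems by simp
    then have "s b \<le> s a" using Suc by simp
    moreover have "s (Suc b) \<le> s b" using assms(1) \<open>a \<le> b\<close> assms(2) Suc.prems by simp
    ultimately show ?thesis by simp
  qed simp
qed

lemma mono_chain:
  fixes h :: "nat \<Rightarrow> real"
  assumes "\<forall>j<D. h j \<le> h (Suc j)" "a \<le> b" "b \<le> D"
  shows "h a \<le> h b"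
  using assms(2,3)
proof (induction b)
  case 0 then show ?case by simp
next
  case (Suc b)
  show ?case
  proof (cases "a = Suc b")
    case False
    then have "a \<le> b" using Suc.prems by simp
    then have "h a \<le> h b" using Suc by simp
    moreover have "h b \<le> h (Suc b)" using assms(1) Suc.prems by simp
    ultimately show ?thesis by simp
  qed simp
qed

lemma grid_sub:
  fixes h :: "nat \<Rightarrow> nat \<Rightarrow> real"
  assumes mono: "\<forall>i<n. \<forall>j<d i. h i j \<le> h i (Suc j)" and range: "\<forall>i<n. \<forall>j\<le>d i. h i j \<in> B i"
    and a: "\<forall>i<n. a i \<le> d i" and b: "\<forall>i<n. b i \<le> d i"
  shows "(\<lambda>i\<in>{..<n}. h i (max (a i) (b i))) = sup (\<lambda>i\<in>{..<n}. h i (a i)) (\<lambda>i\<in>{..<n}. h i (b i))"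
    "(\<lambda>i\<in>{..<n}. h i (min (a i) (b i))) = inf (\<lambda>i\<in>{..<n}. h i (a i)) (\<lambda>i\<in>{..<n}. h i (b i))"
    "(\<lambda>i\<in>{..<n}. h i (a i)) \<in> Pi\<^sub>E {..<n} B" "(\<lambda>i\<in>{..<n}. h i (b i)) \<in> Pi\<^sub>E {..<n} B"
proof -
  have hm: "h i x \<le> h i y" if "i < n" "x \<le> y" "y \<le> d i" for i x y
    using mono_chain[of "d i" "h i" x y] mono that by auto
  show "(\<lambda>i\<in>{..<n}. h i (max (a i) (b i))) = sup (\<lambda>i\<in>{..<n}. h i (a i)) (\<lambda>i\<in>{..<n}. h i (b i))"
  proof
    fix i show "(\<lambda>i\<in>{..<n}. h i (max (a i) (b i))) i = sup (\<lambda>i\<in>{..<n}. h i (a i)) (\<lambda>i\<in>{..<n}. h i (b i)) i"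
    proof (cases "i < n")
      case True
      then show ?thesis using hm[of i "a i" "b i"] hm[of i "b i" "a i"] a b
        by (auto simp: sup_max max_def)
    qed simp
  qed
  show "(\<lambda>i\<in>{..<n}. h i (min (a i) (b i))) = inf (\<lambda>i\<in>{..<n}. h i (a i)) (\<lambda>i\<in>{..<n}. h i (b i))"
  proof
    fix i show "(\<lambda>i\<in>{..<n}. h i (min (a i) (b i))) i = inf (\<lambda>i\<in>{..<n}. h i (a i)) (\<lambda>i\<in>{..<n}. h i (b i)) i"
    proof (cases "i < n")
      case True
      then show ?thesis using hm[of i "a i" "b i"] hm[of i "b i" "a i"] a b
        by (auto simp: inf_min min_def)
    qed simp
  qed
  show "(\<lambda>i\<in>{..<n}. h i (a i)) \<in> Pi\<^sub>E {..<n} B" "(\<lambda>i\<in>{..<n}. h i (b i)) \<in> Pi\<^sub>E {..<n} B"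
    using range a b by auto
qed

theorem theorem4:
  fixes n :: nat and d :: "nat \<Rightarrow> nat" and p :: "nat \<Rightarrow> nat \<Rightarrow> real"
    and f g :: "nat \<Rightarrow> real \<Rightarrow> real" and L U L' U' :: "nat \<Rightarrow> real"
    and \<phi> varphi :: "(nat \<Rightarrow> real) \<Rightarrow> real" and \<sigma> :: "nat \<Rightarrow> nat \<Rightarrow> nat"
  assumes n: "n \<ge> 1"
    and d: "\<forall>i<n. d i \<ge> 1"
    and p_mono: "\<forall>i<n. \<forall>j<d i. p i j < p i (Suc j)"
    and f_range: "\<forall>i<n. \<forall>j\<le>d i. f i (p i j) \<in> {L i..U i}"
    and g_range: "\<forall>i<n. \<forall>j\<le>d i. g i (p i j) \<in> {L' i..U' i}"
    and sub: "submodular_on n (\<lambda>i. {L i..U i}) \<phi>"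
    and super: "supermodular_on n (\<lambda>i. {L' i..U' i}) varphi"
    and nonneg: "\<forall>x\<in>Pi\<^sub>E {..<n} (\<lambda>i. p i ` {0..d i}). \<phi> (\<lambda>i\<in>{..<n}. f i (x i)) \<ge> 0"
    and pos: "\<forall>x\<in>Pi\<^sub>E {..<n} (\<lambda>i. p i ` {0..d i}). varphi (\<lambda>i\<in>{..<n}. g i (x i)) > 0"
    and perm: "\<forall>i<n. \<sigma> i permutes {0..d i}"
    and f_sorted: "\<forall>i<n. \<forall>j<d i. f i (p i (\<sigma> i j)) \<le> f i (p i (\<sigma> i (Suc j)))"
    and g_sorted: "\<forall>i<n. \<forall>j<d i. g i (p i (\<sigma> i j)) \<le> g i (p i (\<sigma> i (Suc j)))"
  shows "let X = Pi\<^sub>E {..<n} (\<lambda>i. p i ` {0..d i});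
             m = Min ((\<lambda>x. \<phi> (\<lambda>i\<in>{..<n}. f i (x i)) / varphi (\<lambda>i\<in>{..<n}. g i (x i))) ` X);
             \<psi> = (\<lambda>j. \<phi> (\<lambda>i\<in>{..<n}. f i (p i (\<sigma> i (j i)))));
             \<theta> = (\<lambda>j. varphi (\<lambda>i\<in>{..<n}. g i (p i (\<sigma> i (j i)))));
             S = LP_feasible_mu n d \<sigma> \<psi> \<theta>
         in m \<in> S \<and> (\<forall>\<mu>\<in>S. m \<le> \<mu>)"
proof -
  define X where "X = Pi\<^sub>E {..<n} (\<lambda>i. p i ` {0..d i})"
  define R where "R = (\<lambda>x. \<phi> (\<lambda>i\<in>{..<n}. f i (x i)) / varphi (\<lambda>i\<in>{..<n}. g i (x i)))"
  define m where "m = Min (R ` X)"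
  define \<psi> where "\<psi> = (\<lambda>j. \<phi> (\<lambda>i\<in>{..<n}. f i (p i (\<sigma> i (j i)))))"
  define \<theta> where "\<theta> = (\<lambda>j. varphi (\<lambda>i\<in>{..<n}. g i (p i (\<sigma> i (j i)))))"
  define S where "S = LP_feasible_mu n d \<sigma> \<psi> \<theta>"
  define N where "N = (\<Sum>i<n. d i)"
  define grid where "grid j \<longleftrightarrow> (\<forall>i<n. j i \<le> d i)" for j :: "nat \<Rightarrow> nat"
  have finX: "finite X" by (simp add: X_def finite_PiE)
  have neX: "X \<noteq> {}"
  proof -
    have "(\<lambda>i\<in>{..<n}. p i 0) \<in> X" by (auto simp: X_def)
    then show ?thesis by blast
  qed
  have sig: "\<sigma> i j \<le> d i" if "i < n" "j \<le> d i" for i j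
    using permutes_in_image[OF perm[rule_format, OF that(1)], of j] that by simp
  have gridX: "(\<lambda>i\<in>{..<n}. p i (\<sigma> i (j i))) \<in> X" if "grid j" for j
    using that sig by (auto simp: X_def grid_def)
  have Rgrid: "R (\<lambda>i\<in>{..<n}. p i (\<sigma> i (j i))) = \<psi> j / \<theta> j" for j
  proof -
    have "(\<lambda>i\<in>{..<n}. f i ((\<lambda>i\<in>{..<n}. p i (\<sigma> i (j i))) i)) = (\<lambda>i\<in>{..<n}. f i (p i (\<sigma> i (j i))))"
      by (rule restrict_ext) simp
    moreover have "(\<lambda>i\<in>{..<n}. g i ((\<lambda>i\<in>{..<n}. p i (\<sigma> i (j i))) i)) = (\<lambda>i\<in>{..<n}. g i (p i (\<sigma> i (j i))))"
      by (rule restrict_ext) simp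
    ultimately show ?thesis by (simp add: R_def \<psi>_def \<theta>_def)
  qed
  have thpos: "\<theta> j > 0" if "grid j" for j
  proof -
    have "(\<lambda>i\<in>{..<n}. g i ((\<lambda>i\<in>{..<n}. p i (\<sigma> i (j i))) i)) = (\<lambda>i\<in>{..<n}. g i (p i (\<sigma> i (j i))))"
      by (rule restrict_ext) simp
    moreover have "0 < varphi (\<lambda>i\<in>{..<n}. g i ((\<lambda>i\<in>{..<n}. p i (\<sigma> i (j i))) i))"
      using pos gridX[OF that] unfolding X_def by blast
    ultimately show ?thesis unfolding \<theta>_def by simp
  qed
  have mle: "m \<le> \<psi> j / \<theta> j" if "grid j" for j
    unfolding m_def using finX gridX[OF that] Rgrid[of j] by (metis Min_le finite_imageI imageI)
  have hnn: "\<psi> j - m * \<theta> j \<ge> 0" if "grid j" for j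
    using mle[OF that] thpos[OF that] by (simp add: field_simps)
  have Rnn: "R x \<ge> 0" if "x \<in> X" for x
    using nonneg[rule_format, of x] pos[rule_format, of x] that unfolding R_def X_def
    by (intro divide_nonneg_pos) auto
  have min_in: "m \<in> R ` X" unfolding m_def using finX neX by (intro Min_in) auto
  have m0: "m \<ge> 0" using min_in Rnn by auto
  obtain J where J: "grid J" and mJ: "m = \<psi> J / \<theta> J"
  proof -
    obtain x where x: "x \<in> X" "m = R x" using min_in by auto
    have "\<forall>i<n. \<exists>j. j \<le> d i \<and> p i (\<sigma> i j) = x i"
    proof (intro allI impI)
      fix i assume i: "i < n"
      have "x i \<in> p i ` {0..d i}" using x(1) i unfolding X_def by (auto simp: PiE_iff)
      then obtain a where a: "a \<le> d i" "x i = p i a" by auto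
      have "a \<in> \<sigma> i ` {0..d i}" using permutes_image[OF perm[rule_format, OF i]] a by auto
      then show "\<exists>j. j \<le> d i \<and> p i (\<sigma> i j) = x i" using a by auto
    qed
    then obtain J where JJ: "\<forall>i<n. J i \<le> d i \<and> p i (\<sigma> i (J i)) = x i"
      by (auto intro: choice[where Q="\<lambda>i j. i < n \<longrightarrow> j \<le> d i \<and> p i (\<sigma> i j) = x i", THEN exE])
    have "x = (\<lambda>i\<in>{..<n}. p i (\<sigma> i (J i)))"
      using x(1) JJ by (auto simp: X_def fun_eq_iff PiE_def extensional_def)
    then have "m = \<psi> J / \<theta> J" using x Rgrid by simp
    then show ?thesis using that JJ by (auto simp: grid_def)
  qed
  have psub: "\<psi> (\<lambda>i. max (a i) (b i)) + \<psi> (\<lambda>i. min (a i) (b i)) \<le> \<psi> a + \<psi> b"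
    if "\<forall>i<n. a i \<le> d i" "\<forall>i<n. b i \<le> d i" for a b
  proof -
    note G = grid_sub[of n d "\<lambda>i j. f i (p i (\<sigma> i j))" "\<lambda>i. {L i..U i}" a b]
    have c1: "\<forall>i<n. \<forall>j<d i. f i (p i (\<sigma> i j)) \<le> f i (p i (\<sigma> i (Suc j)))" by (rule f_sorted)
    have c2: "\<forall>i<n. \<forall>j\<le>d i. f i (p i (\<sigma> i j)) \<in> {L i..U i}" using f_range sig by auto
    note G' = G[OF c1 c2 that]
    show ?thesis using sub G' unfolding submodular_on_def \<psi>_def by simp
  qed
  have tsup: "\<theta> (\<lambda>i. max (a i) (b i)) + \<theta> (\<lambda>i. min (a i) (b i)) \<ge> \<theta> a + \<theta> b"
    if "\<forall>i<n. a i \<le> d i" "\<forall>i<n. b i \<le> d i" for a b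
  proof -
    note G = grid_sub[of n d "\<lambda>i j. g i (p i (\<sigma> i j))" "\<lambda>i. {L' i..U' i}" a b]
    have c1: "\<forall>i<n. \<forall>j<d i. g i (p i (\<sigma> i j)) \<le> g i (p i (\<sigma> i (Suc j)))" by (rule g_sorted)
    have c2: "\<forall>i<n. \<forall>j\<le>d i. g i (p i (\<sigma> i j)) \<in> {L' i..U' i}" using g_range sig by auto
    note G' = G[OF c1 c2 that]
    show ?thesis using super G' unfolding supermodular_on_def \<theta>_def by simp
  qed
  have ploc: "\<psi> a = \<psi> b" if "\<forall>i<n. a i = b i" for a b
    unfolding \<psi>_def using that by (intro arg_cong[where f=\<phi>] restrict_ext) simp
  have tloc: "\<theta> a = \<theta> b" if "\<forall>i<n. a i = b i" for a b
    unfolding \<theta>_def using that by (intro arg_cong[where f=varphi] restrict_ext) simp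
  have stc_ex: "\<exists>stc. staircase n d stc \<and>
       (\<forall>t. 1 \<le> t \<longrightarrow> t < N \<longrightarrow> z (stc ! t) (stair2 stc (Suc t)) \<le> z (stc ! (t - 1)) (stair2 stc t))"
    if "\<forall>i<n. \<forall>k. 1 \<le> k \<longrightarrow> k < d i \<longrightarrow> z i (Suc k) \<le> z i k" for z :: "nat \<Rightarrow> nat \<Rightarrow> real"
    using stair_exists[of n N z] that by (simp add: N_def)
  have Npos: "1 \<le> N"
  proof -
    have "d 0 \<le> N" unfolding N_def using n by (intro member_le_sum) auto
    then show ?thesis using d n by force
  qed
  have mS: "m \<in> S"
  proof -
    define \<rho> where "\<rho> = 1 / \<theta> J"
    have \<rho>pos: "\<rho> > 0" using thpos[OF J] by (simp add: \<rho>_def)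
    have m\<rho>: "m = \<rho> * \<psi> J" using mJ by (simp add: \<rho>_def)
    have one\<rho>: "\<rho> * \<theta> J = 1" using thpos[OF J] by (simp add: \<rho>_def)
    define w where "w i k = (if 1 \<le> k \<and> k \<le> J i then 1 else (0::real))" for i k
    define s where "s i k = \<rho> * Lmap (d i) (\<sigma> i) (w i) k" for i k
    define s' where "s' i k = \<rho> * w i k" for i k
    have wR: "w i \<in> Rvec (d i)" if "i < n" for i
      using J that by (auto simp: w_def Rvec_def grid_def)
    have Tw: "\<forall>j\<le>d i. Tmap (d i) (Lmap (d i) (\<sigma> i) (w i)) j \<ge> 0" if i: "i < n" for i
    proof (intro allI impI)
      fix j assume j: "j \<le> d i"
      have "j \<in> \<sigma> i ` {0..d i}" using permutes_image[OF perm[rule_format, OF i]] j by auto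
      then obtain k where k: "k \<le> d i" "j = \<sigma> i k" by auto
      have "Tmap (d i) (Lmap (d i) (\<sigma> i) (w i)) j = Tmap (d i) (w i) k"
        using Tmap_Lmap[OF perm[rule_format, OF i]] Pmat_sigma[OF perm[rule_format, OF i] k(1)] k by simp
      also have "\<dots> \<ge> 0" using J i k by (auto simp: Tmap_def zext_def w_def grid_def)
      finally show "Tmap (d i) (Lmap (d i) (\<sigma> i) (w i)) j \<ge> 0" .
    qed
    have c1: "\<forall>stc. staircase n d stc \<longrightarrow>
        m \<ge> \<psi> (stair_pt stc 0) * \<rho> +
            (\<Sum>t\<in>{1..(\<Sum>i<n. d i)}. (\<psi> (stair_pt stc t) - \<psi> (stair_pt stc (t - 1))) * s' (stc ! (t - 1)) (stair2 stc t)) \<and>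
        1 \<le> \<theta> (stair_pt stc 0) * \<rho> +
            (\<Sum>t\<in>{1..(\<Sum>i<n. d i)}. (\<theta> (stair_pt stc t) - \<theta> (stair_pt stc (t - 1))) * s' (stc ! (t - 1)) (stair2 stc t))"
    proof (intro allI impI conjI)
      fix stc assume st: "staircase n d stc"
      define ind where "ind t = (if 1 \<le> stair2 stc t \<and> stair2 stc t \<le> J (stc ! (t - 1)) then 1 else (0::real))" for t
      have s'e: "s' (stc ! (t - 1)) (stair2 stc t) = \<rho> * ind t" for t
        by (simp add: s'_def w_def ind_def)
      have A1: "\<psi> (stair_pt stc 0) + (\<Sum>t\<in>{1..(\<Sum>i<n. d i)}. (\<psi> (stair_pt stc t) - \<psi> (stair_pt stc (t - 1))) * ind t) \<le> \<psi> J"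
        unfolding ind_def by (rule achieve[OF st]) (use J ploc psub in \<open>auto simp: grid_def\<close>)
      have A2: "(-\<theta>) (stair_pt stc 0) + (\<Sum>t\<in>{1..(\<Sum>i<n. d i)}. ((-\<theta>) (stair_pt stc t) - (-\<theta>) (stair_pt stc (t - 1))) * ind t) \<le> (-\<theta>) J"
        unfolding ind_def
      proof (rule achieve[OF st])
        show "\<forall>i<n. J i \<le> d i" using J by (simp add: grid_def)
        show "(- \<theta>) a = (- \<theta>) b" if "\<forall>i<n. a i = b i" for a b using tloc[OF that] by simp
        show "(- \<theta>) (\<lambda>i. max (a i) (b i)) + (- \<theta>) (\<lambda>i. min (a i) (b i)) \<le> (- \<theta>) a + (- \<theta>) b"
          if "\<forall>i<n. a i \<le> d i" "\<forall>i<n. b i \<le> d i" for a b using tsup[OF that] by simp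
      qed
      have A2': "\<theta> (stair_pt stc 0) + (\<Sum>t\<in>{1..(\<Sum>i<n. d i)}. (\<theta> (stair_pt stc t) - \<theta> (stair_pt stc (t - 1))) * ind t) \<ge> \<theta> J"
      proof -
        have neg: "(\<Sum>t\<in>{1..(\<Sum>i<n. d i)}. ((-\<theta>) (stair_pt stc t) - (-\<theta>) (stair_pt stc (t - 1))) * ind t)
          = - (\<Sum>t\<in>{1..(\<Sum>i<n. d i)}. (\<theta> (stair_pt stc t) - \<theta> (stair_pt stc (t - 1))) * ind t)"
          unfolding sum_negf[symmetric] by (rule sum.cong) (simp_all add: algebra_simps)
        show ?thesis using A2 unfolding neg by simp
      qed
      have E1: "\<psi> (stair_pt stc 0) * \<rho> +
            (\<Sum>t\<in>{1..(\<Sum>i<n. d i)}. (\<psi> (stair_pt stc t) - \<psi> (stair_pt stc (t - 1))) * s' (stc ! (t - 1)) (stair2 stc t))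
          = \<rho> * (\<psi> (stair_pt stc 0) + (\<Sum>t\<in>{1..(\<Sum>i<n. d i)}. (\<psi> (stair_pt stc t) - \<psi> (stair_pt stc (t - 1))) * ind t))"
      proof -
        have "(\<Sum>t\<in>{1..(\<Sum>i<n. d i)}. (\<psi> (stair_pt stc t) - \<psi> (stair_pt stc (t - 1))) * s' (stc ! (t - 1)) (stair2 stc t))
          = \<rho> * (\<Sum>t\<in>{1..(\<Sum>i<n. d i)}. (\<psi> (stair_pt stc t) - \<psi> (stair_pt stc (t - 1))) * ind t)"
          unfolding sum_distrib_left by (rule sum.cong) (simp_all only: s'e ac_simps)
        then show ?thesis by (simp add: algebra_simps)
      qed
      have E2: "\<theta> (stair_pt stc 0) * \<rho> +
            (\<Sum>t\<in>{1..(\<Sum>i<n. d i)}. (\<theta> (stair_pt stc t) - \<theta> (stair_pt stc (t - 1))) * s' (stc ! (t - 1)) (stair2 stc t))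
          = \<rho> * (\<theta> (stair_pt stc 0) + (\<Sum>t\<in>{1..(\<Sum>i<n. d i)}. (\<theta> (stair_pt stc t) - \<theta> (stair_pt stc (t - 1))) * ind t))"
      proof -
        have "(\<Sum>t\<in>{1..(\<Sum>i<n. d i)}. (\<theta> (stair_pt stc t) - \<theta> (stair_pt stc (t - 1))) * s' (stc ! (t - 1)) (stair2 stc t))
          = \<rho> * (\<Sum>t\<in>{1..(\<Sum>i<n. d i)}. (\<theta> (stair_pt stc t) - \<theta> (stair_pt stc (t - 1))) * ind t)"
          unfolding sum_distrib_left by (rule sum.cong) (simp_all only: s'e ac_simps)
        then show ?thesis by (simp add: algebra_simps)
      qed
      show "m \<ge> \<psi> (stair_pt stc 0) * \<rho> +
            (\<Sum>t\<in>{1..(\<Sum>i<n. d i)}. (\<psi> (stair_pt stc t) - \<psi> (stair_pt stc (t - 1))) * s' (stc ! (t - 1)) (stair2 stc t))"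
        unfolding E1 m\<rho> using A1 \<rho>pos by (simp add: mult_left_mono)
      show "1 \<le> \<theta> (stair_pt stc 0) * \<rho> +
            (\<Sum>t\<in>{1..(\<Sum>i<n. d i)}. (\<theta> (stair_pt stc t) - \<theta> (stair_pt stc (t - 1))) * s' (stc ! (t - 1)) (stair2 stc t))"
        unfolding E2 one\<rho>[symmetric] using A2' \<rho>pos by (simp add: mult_left_mono)
    qed
    have c2: "\<forall>i<n. \<rho> \<ge> s i 1 \<and> (\<forall>j. 1 \<le> j \<and> j < d i \<longrightarrow> s i j \<ge> s i (Suc j)) \<and> s i (d i) \<ge> 0"
    proof (intro allI impI conjI)
      fix i assume i: "i < n"
      note R = reg_dir[OF Tw[OF i] d[rule_format, OF i]]
      show "\<rho> \<ge> s i 1" using R \<rho>pos by (simp add: s_def)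
      show "s i j \<ge> s i (Suc j)" if "1 \<le> j \<and> j < d i" for j using R \<rho>pos that by (simp add: s_def)
      show "s i (d i) \<ge> 0" using R \<rho>pos by (simp add: s_def)
    qed
    have c3: "\<forall>i<n. \<forall>j. 1 \<le> j \<and> j \<le> d i \<longrightarrow>
        s' i j = Amul (d i) (\<sigma> i) (vrestr (d i) (s i)) j + cvec (d i) (\<sigma> i) j * \<rho>"
    proof (intro allI impI)
      fix i j assume i: "i < n" and j: "1 \<le> j \<and> j \<le> d i"
      have LR: "Lmap (d i) (\<sigma> i) (w i) \<in> Rvec (d i)" by (rule Lmap_Rvec)
      have vr: "vrestr (d i) (s i) = (\<lambda>k. \<rho> * Lmap (d i) (\<sigma> i) (w i) k)"
      proof
        fix k
        show "vrestr (d i) (s i) k = \<rho> * Lmap (d i) (\<sigma> i) (w i) k"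
        proof (cases "1 \<le> k \<and> k \<le> d i")
          case False
          then have "k = 0 \<or> d i < k" by auto
          then show ?thesis using LR False unfolding Rvec_def vrestr_def by auto
        qed (simp add: vrestr_def s_def)
      qed
      show "s' i j = Amul (d i) (\<sigma> i) (vrestr (d i) (s i)) j + cvec (d i) (\<sigma> i) j * \<rho>"
        unfolding vr Amul_scale[OF perm[rule_format, OF i] LR] Linv_Lmap[OF perm[rule_format, OF i] wR[OF i]]
        by (simp add: s'_def)
    qed
    show ?thesis unfolding S_def LP_feasible_mu_def using c1 c2 c3 by blast
  qed
  have lowb: "m \<le> \<mu>" if \<mu>S: "\<mu> \<in> S" for \<mu>
  proof -
    obtain \<rho> :: real and s s' :: "nat \<Rightarrow> nat \<Rightarrow> real" where
      cst: "\<forall>stc. staircase n d stc \<longrightarrow>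
        \<mu> \<ge> \<psi> (stair_pt stc 0) * \<rho> +
            (\<Sum>t\<in>{1..(\<Sum>i<n. d i)}. (\<psi> (stair_pt stc t) - \<psi> (stair_pt stc (t - 1))) * s' (stc ! (t - 1)) (stair2 stc t)) \<and>
        1 \<le> \<theta> (stair_pt stc 0) * \<rho> +
            (\<Sum>t\<in>{1..(\<Sum>i<n. d i)}. (\<theta> (stair_pt stc t) - \<theta> (stair_pt stc (t - 1))) * s' (stc ! (t - 1)) (stair2 stc t))"
      and sc: "\<forall>i<n. \<rho> \<ge> s i 1 \<and> (\<forall>j. 1 \<le> j \<and> j < d i \<longrightarrow> s i j \<ge> s i (Suc j)) \<and> s i (d i) \<ge> 0"
      and s'c: "\<forall>i<n. \<forall>j. 1 \<le> j \<and> j \<le> d i \<longrightarrow>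
        s' i j = Amul (d i) (\<sigma> i) (vrestr (d i) (s i)) j + cvec (d i) (\<sigma> i) j * \<rho>"
      using \<mu>S unfolding S_def LP_feasible_mu_def by blast
    have sbnd: "0 \<le> s i k \<and> s i k \<le> \<rho>" if i: "i < n" and k: "1 \<le> k" "k \<le> d i" for i k
    proof -
      have ch: "\<forall>j. 1 \<le> j \<longrightarrow> j < d i \<longrightarrow> s i (Suc j) \<le> s i j" using sc i by auto
      have "s i (d i) \<le> s i k" using chain_le[OF ch k(1) k(2)] by simp
      moreover have "s i k \<le> s i 1" using chain_le[OF ch _ k(1) k(2)] by simp
      ultimately show ?thesis using sc i by force
    qed
    have \<rho>0: "\<rho> \<ge> 0" using sbnd[of 0 1] n d by force
    obtain stc0 where st0: "staircase n d stc0"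
      using stc_ex[of "\<lambda>_ _. 0"] by auto
    have \<rho>pos: "\<rho> > 0"
    proof (rule ccontr)
      assume "\<not> \<rho> > 0"
      then have r0: "\<rho> = 0" using \<rho>0 by simp
      have s'0: "s' i k = 0" if "i < n" "1 \<le> k" "k \<le> d i" for i k
      proof -
        have "vrestr (d i) (s i) = (\<lambda>_. 0)"
          using sbnd[OF that(1)] r0 by (force simp: vrestr_def fun_eq_iff)
        then show ?thesis using s'c that r0 by (simp add: Amul_def cvec_def)
      qed
      have "(\<Sum>t\<in>{1..(\<Sum>i<n. d i)}. (\<theta> (stair_pt stc0 t) - \<theta> (stair_pt stc0 (t - 1))) * s' (stc0 ! (t - 1)) (stair2 stc0 t)) = 0"
        by (rule sum.neutral) (use s'0 stair_props[OF st0] in auto)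
      then show False using cst st0 r0 by force
    qed
    define zz where "zz i = (\<lambda>j. vrestr (d i) (s i) j / \<rho>)" for i
    have zzR: "zz i \<in> Rvec (d i)" for i by (auto simp: zz_def vrestr_def Rvec_def)
    have vzz: "vrestr (d i) (s i) = (\<lambda>j. \<rho> * zz i j)" for i
      using \<rho>pos by (auto simp: zz_def fun_eq_iff)
    define z' where "z' i = Linv (d i) (\<sigma> i) (zz i)" for i
    have s'z: "s' i k = \<rho> * z' i k" if "i < n" "1 \<le> k" "k \<le> d i" for i k
      using s'c that Amul_scale[OF perm[rule_format, OF that(1)] zzR[of i], of \<rho> k]
      by (simp add: vzz z'_def)
    have Tzz: "\<forall>j\<le>d i. Tmap (d i) (zz i) j \<ge> 0" if i: "i < n" for i
    proof (rule reg_conv)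
      show "zz i 1 \<le> 1" using sc i \<rho>pos d by (simp add: zz_def vrestr_def)
      show "\<forall>k. 1 \<le> k \<longrightarrow> k < d i \<longrightarrow> zz i (Suc k) \<le> zz i k"
        using sc i \<rho>pos by (simp add: zz_def vrestr_def divide_right_mono)
      show "zz i (d i) \<ge> 0" using sc i \<rho>pos d by (simp add: zz_def vrestr_def)
      show "1 \<le> d i" using d i by simp
    qed
    have Tz': "\<forall>j\<le>d i. Tmap (d i) (z' i) j \<ge> 0" if i: "i < n" for i
    proof (intro allI impI)
      fix k assume k: "k \<le> d i"
      have pi: "\<sigma> i permutes {0..d i}" using perm i by simp
      have "Tmap (d i) (zz i) = Pmat (d i) (\<sigma> i) (Tmap (d i) (z' i))"
        using Tmap_Lmap[OF pi, of "z' i"] Linv_props(2)[OF pi zzR[of i]] by (simp add: z'_def)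
      then have "Tmap (d i) (z' i) k = Tmap (d i) (zz i) (\<sigma> i k)"
        using Pmat_sigma[OF pi k] by simp
      then show "Tmap (d i) (z' i) k \<ge> 0" using Tzz[OF i] sig[OF i k] by simp
    qed
    have z'R: "z' i 1 \<le> 1" "\<forall>k. 1 \<le> k \<longrightarrow> k < d i \<longrightarrow> z' i (Suc k) \<le> z' i k" "z' i (d i) \<ge> 0"
      if "i < n" for i
      using reg_dir[OF Tz'[OF that] d[rule_format, OF that]] by auto
    obtain stc where st: "staircase n d stc" and
      stm: "\<forall>t. 1 \<le> t \<longrightarrow> t < N \<longrightarrow> z' (stc ! t) (stair2 stc (Suc t)) \<le> z' (stc ! (t - 1)) (stair2 stc t)"
      using stc_ex[of z'] z'R by auto
    have lenN: "length stc = N" using st by (simp add: staircase_def N_def)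
    define a where "a t = (if t = 0 then 1 else z' (stc ! (t - 1)) (stair2 stc t))" for t
    define h where "h t = \<psi> (stair_pt stc t) - m * \<theta> (stair_pt stc t)" for t
    have sp: "stc ! (t - 1) < n" "1 \<le> stair2 stc t" "stair2 stc t \<le> d (stc ! (t - 1))"
      if "1 \<le> t" "t \<le> N" for t using stair_props[OF st] that by (auto simp: N_def)
    have s'a: "s' (stc ! (t - 1)) (stair2 stc t) = \<rho> * a t" if "t \<in> {1..N}" for t
      using that sp[of t] s'z by (auto simp: a_def)
    have abel': "h 0 + (\<Sum>t\<in>{1..N}. (h t - h (t - 1)) * a t) \<ge> 0"
    proof (rule abel)
      show "a 0 = 1" by (simp add: a_def)
      show "\<forall>t<N. a (Suc t) \<le> a t"
      proof (intro allI impI)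
        fix t assume t: "t < N"
        show "a (Suc t) \<le> a t"
        proof (cases "t = 0")
          case True
          have "stair2 stc 1 = 1" using stair2_Suc[of 0 stc] lenN Npos by (simp add: stair_pt_0)
          then show ?thesis using True z'R(1)[OF sp(1)[of 1]] Npos by (simp add: a_def)
        next
          case False
          then show ?thesis using stm t by (simp add: a_def)
        qed
      qed
      show "a N \<ge> 0"
      proof -
        have "stair2 stc N = d (stc ! (N - 1))"
          using lenN sp(1)[of N] Npos st by (simp add: stair2_def staircase_def)
        then show ?thesis using z'R(3)[OF sp(1)[of N]] Npos by (simp add: a_def)
      qed
      show "\<forall>t\<le>N. h t \<ge> 0"
        using hnn stair_pt_le[OF st] by (auto simp: h_def grid_def)
    qed
    have P: "\<psi> (stair_pt stc 0) * \<rho> +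
            (\<Sum>t\<in>{1..N}. (\<psi> (stair_pt stc t) - \<psi> (stair_pt stc (t - 1))) * s' (stc ! (t - 1)) (stair2 stc t))
        = \<rho> * (\<psi> (stair_pt stc 0) + (\<Sum>t\<in>{1..N}. (\<psi> (stair_pt stc t) - \<psi> (stair_pt stc (t - 1))) * a t))"
    proof -
      have "(\<Sum>t\<in>{1..N}. (\<psi> (stair_pt stc t) - \<psi> (stair_pt stc (t - 1))) * s' (stc ! (t - 1)) (stair2 stc t))
        = \<rho> * (\<Sum>t\<in>{1..N}. (\<psi> (stair_pt stc t) - \<psi> (stair_pt stc (t - 1))) * a t)"
        unfolding sum_distrib_left by (rule sum.cong) (simp_all only: s'a ac_simps)
      then show ?thesis by (simp add: algebra_simps)
    qed
    have Q: "\<theta> (stair_pt stc 0) * \<rho> +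
            (\<Sum>t\<in>{1..N}. (\<theta> (stair_pt stc t) - \<theta> (stair_pt stc (t - 1))) * s' (stc ! (t - 1)) (stair2 stc t))
        = \<rho> * (\<theta> (stair_pt stc 0) + (\<Sum>t\<in>{1..N}. (\<theta> (stair_pt stc t) - \<theta> (stair_pt stc (t - 1))) * a t))"
    proof -
      have "(\<Sum>t\<in>{1..N}. (\<theta> (stair_pt stc t) - \<theta> (stair_pt stc (t - 1))) * s' (stc ! (t - 1)) (stair2 stc t))
        = \<rho> * (\<Sum>t\<in>{1..N}. (\<theta> (stair_pt stc t) - \<theta> (stair_pt stc (t - 1))) * a t)"
        unfolding sum_distrib_left by (rule sum.cong) (simp_all only: s'a ac_simps)
      then show ?thesis by (simp add: algebra_simps)
    qed
    define PP where "PP = \<psi> (stair_pt stc 0) + (\<Sum>t\<in>{1..N}. (\<psi> (stair_pt stc t) - \<psi> (stair_pt stc (t - 1))) * a t)"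
    define QQ where "QQ = \<theta> (stair_pt stc 0) + (\<Sum>t\<in>{1..N}. (\<theta> (stair_pt stc t) - \<theta> (stair_pt stc (t - 1))) * a t)"
    have HH: "h 0 + (\<Sum>t\<in>{1..N}. (h t - h (t - 1)) * a t) = PP - m * QQ"
    proof -
      have "(\<Sum>t\<in>{1..N}. (h t - h (t - 1)) * a t) =
        (\<Sum>t\<in>{1..N}. (\<psi> (stair_pt stc t) - \<psi> (stair_pt stc (t - 1))) * a t) - m * (\<Sum>t\<in>{1..N}. (\<theta> (stair_pt stc t) - \<theta> (stair_pt stc (t - 1))) * a t)"
        unfolding sum_distrib_left sum_subtractf[symmetric] by (rule sum.cong) (simp_all add: h_def algebra_simps)
      then show ?thesis by (simp add: PP_def QQ_def h_def algebra_simps)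
    qed
    have c: "\<mu> \<ge> \<rho> * PP" "1 \<le> \<rho> * QQ" using cst st P Q by (auto simp: PP_def QQ_def N_def)
    have "PP \<ge> m * QQ" using abel' HH by simp
    then have "\<rho> * PP \<ge> \<rho> * (m * QQ)" using \<rho>pos by (simp add: mult_left_mono)
    moreover have "\<rho> * (m * QQ) \<ge> m" using c(2) m0
      by (metis mult.left_commute mult_left_mono mult.right_neutral)
    ultimately show ?thesis using c(1) by linarith
  qed
  have res: "m \<in> S \<and> (\<forall>\<mu>\<in>S. m \<le> \<mu>)" using mS lowb by blast
  show ?thesis using res unfolding Let_def X_def R_def m_def \<psi>_def \<theta>_def S_def .
qed

end
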